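(* Let $\mathbf{u}=(u_1,u_2)\in\mathbb{R}[x_1,x_2]_d^2$ and $p\in\Sigma[x_1,x_2]_{2d}$, and suppose $\nabla f_p(\mathbf{u})=0$. If $p\in\operatorname{im}(\mathcal{A}_{\mathbf{u}})$, where $\mathcal{A}_{\mathbf{u}}:\mathbb{R}[x_1,x_2]_d^2\to\mathbb{R}[x_1,x_2]_{2d}$, $(v_1,v_2)\mapsto u_1v_1+u_2v_2$, then $f_p(\mathbf{u})=0$.
   Context: $\mathbb{R}[x_1,x_2]_n$ denotes the space of real binary forms (homogeneous polynomials in $x_1,x_2$) of degree $n$, and $\Sigma[x_1,x_2]_{2d}\subseteq\mathbb{R}[x_1,x_2]_{2d}$ the cone of sums of squares of binary forms of degree $d$. Fix any inner product $\langle\cdot,\cdot\rangle$ on $\mathbb{R}[x_1,x_2]_{2d}$ with induced norm $\|\cdot\|$, and let $f_p(\mathbf{u})=\|u_1^2+u_2^2-p\|^2$ for $\mathbf{u}\in\mathbb{R}[x_1,x_2]_d^2$. The gradient is taken with respect to the finite-dimensional real vector space $\mathbb{R}[x_1,x_2]_d^2$; $\nabla f_p(\mathbf{u})=0$ is equivalent to $\langle u_1v_1+u_2v_2,\,u_1^2+u_2^2-p\rangle=0$ for all $(v_1,v_2)\in\mathbb{R}[x_1,x_2]_d^2$. *)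

theory Defs
  imports "HOL-Analysis.Analysis" "HOL-Computational_Algebra.Polynomial"
begin

text \<open>A real binary form of degree n, a_0 x2^n + a_1 x1 x2^(n-1) + ... + a_n x1^n, is encoded
  by the univariate polynomial a_0 + a_1 X + ... + a_n X^n of degree at most n
  (dehomogenisation x2 = 1).  This is a linear isomorphism, and multiplication of forms
  of degrees m and n corresponds to multiplication of polynomials.\<close>

definition bforms :: "nat \<Rightarrow> real poly set" where
  "bforms n = {q. degree q \<le> n}"

definition sos_forms :: "nat \<Rightarrow> real poly set" where
  "sos_forms d = {p. \<exists>qs. (\<forall>q\<in>set qs. q \<in> bforms d) \<and> p = sum_list (map (\<lambda>q. q ^ 2) qs)}"

definition is_inner_product :: "nat \<Rightarrow> (real poly \<Rightarrow> real poly \<Rightarrow> real) \<Rightarrow> bool" where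
  "is_inner_product n ip \<longleftrightarrow>
     (\<forall>p\<in>bforms n. \<forall>q\<in>bforms n. ip p q = ip q p) \<and>
     (\<forall>a b. \<forall>p\<in>bforms n. \<forall>q\<in>bforms n. \<forall>r\<in>bforms n.
         ip (smult a p + smult b q) r = a * ip p r + b * ip q r) \<and>
     (\<forall>p\<in>bforms n. p \<noteq> 0 \<longrightarrow> ip p p > 0)"

definition ip_norm :: "(real poly \<Rightarrow> real poly \<Rightarrow> real) \<Rightarrow> real poly \<Rightarrow> real" where
  "ip_norm ip q = sqrt (ip q q)"

definition fp :: "(real poly \<Rightarrow> real poly \<Rightarrow> real) \<Rightarrow> real poly \<Rightarrow> real poly \<Rightarrow> real poly \<Rightarrow> real" where
  "fp ip p u1 u2 = (ip_norm ip (u1 ^ 2 + u2 ^ 2 - p)) ^ 2"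

definition grad_zero :: "nat \<Rightarrow> (real poly \<Rightarrow> real poly \<Rightarrow> real) \<Rightarrow> real poly \<Rightarrow> real poly \<Rightarrow> real poly \<Rightarrow> bool" where
  "grad_zero d ip p u1 u2 \<longleftrightarrow>
     (\<forall>v1\<in>bforms d. \<forall>v2\<in>bforms d.
        ((\<lambda>t. fp ip p (u1 + smult t v1) (u2 + smult t v2)) has_real_derivative 0) (at 0))"

end

theory Submission
  imports Defs
begin

lemma bforms_add: "x \<in> bforms n \<Longrightarrow> y \<in> bforms n \<Longrightarrow> x + y \<in> bforms n"
  unfolding bforms_def by (simp add: degree_add_le)
lemma bforms_smult: "x \<in> bforms n \<Longrightarrow> smult c x \<in> bforms n"
  unfolding bforms_def by (metis mem_Collect_eq degree_smult_le le_trans)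
lemma bforms_diff: "x \<in> bforms n \<Longrightarrow> y \<in> bforms n \<Longrightarrow> x - y \<in> bforms n"
  unfolding bforms_def by (simp add: degree_diff_le)
lemma bforms_mult: "x \<in> bforms d \<Longrightarrow> y \<in> bforms d \<Longrightarrow> x * y \<in> bforms (2*d)"
  unfolding bforms_def by (metis mem_Collect_eq degree_mult_le add_mono mult_2 le_trans)

lemma bforms_0: "0 \<in> bforms n" unfolding bforms_def by simp

lemma ip_lin:
  assumes "is_inner_product n ip" "x \<in> bforms n" "y \<in> bforms n" "q \<in> bforms n"
  shows "ip (smult a x + smult b y) q = a * ip x q + b * ip y q"
proof -
  have "\<forall>a b. \<forall>p\<in>bforms n. \<forall>q\<in>bforms n. \<forall>r\<in>bforms n.
         ip (smult a p + smult b q) r = a * ip p r + b * ip q r"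
    using assms(1) unfolding is_inner_product_def by (rule conjunct1[OF conjunct2])
  thus ?thesis using assms(2-4) by simp
qed

lemma ip_sym:
  assumes "is_inner_product n ip" "x \<in> bforms n" "y \<in> bforms n"
  shows "ip x y = ip y x"
proof -
  have "\<forall>p\<in>bforms n. \<forall>q\<in>bforms n. ip p q = ip q p"
    using assms(1) unfolding is_inner_product_def by (rule conjunct1)
  thus ?thesis using assms(2-3) by simp
qed

lemma ip_pos:
  assumes "is_inner_product n ip" "x \<in> bforms n" "x \<noteq> 0"
  shows "ip x x > 0"
proof -
  have "\<forall>p\<in>bforms n. p \<noteq> 0 \<longrightarrow> ip p p > 0"
    using assms(1) unfolding is_inner_product_def by (rule conjunct2[OF conjunct2])
  thus ?thesis using assms(2-3) by simp
qed

lemma ip_lin3: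
  assumes "is_inner_product n ip" "x \<in> bforms n" "y \<in> bforms n" "z \<in> bforms n" "q \<in> bforms n"
  shows "ip (x + smult b y + smult c z) q = ip x q + b * ip y q + c * ip z q"
proof -
  have xy: "smult 1 x + smult b y \<in> bforms n" using assms(2,3) by (intro bforms_add bforms_smult)
  have "ip (x + smult b y + smult c z) q = ip (smult 1 (smult 1 x + smult b y) + smult c z) q"
    by simp
  also have "\<dots> = 1 * ip (smult 1 x + smult b y) q + c * ip z q"
    by (rule ip_lin[OF assms(1) xy assms(4) assms(5)])
  also have "ip (smult 1 x + smult b y) q = 1 * ip x q + b * ip y q"
    by (rule ip_lin[OF assms(1) assms(2) assms(3) assms(5)])
  finally show ?thesis by simp
qed

lemma ip_zero:
  assumes "is_inner_product n ip"
  shows "ip 0 0 = 0"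
  using ip_lin[OF assms bforms_0 bforms_0 bforms_0, of 0 0] by simp

lemma ip_nonneg:
  assumes "is_inner_product n ip" "x \<in> bforms n"
  shows "ip x x \<ge> 0"
proof (cases "x = 0")
  case True thus ?thesis using ip_zero[OF assms(1)] by simp
next
  case False thus ?thesis using ip_pos[OF assms] by simp
qed

lemma sc: "smult c x = [:c:] * x" for c and x :: "real poly" by simp
lemma sq: "[:t^2:] = [:t:]^2" for t :: real by (simp add: power2_eq_square mult_to_poly)
lemma s2: "smult 2 x = 2 * x" for x :: "real poly" by (metis mult_2 smult_add_left one_add_one smult_1_left)
lemma ring_id: "(u1 + T* v1)^2 + (u2 + T* v2)^2 - p = (u1^2+u2^2-p) + T* (2* (u1* v1+u2* v2)) + T^2* (v1^2+v2^2)"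
  for u1 u2 v1 v2 p T :: "'a::comm_ring_1" by (simp add: algebra_simps power2_eq_square)

theorem proposition4p1:
  fixes d :: nat and ip :: "real poly \<Rightarrow> real poly \<Rightarrow> real" and u1 u2 p :: "real poly"
  assumes "is_inner_product (2 * d) ip"
    and "u1 \<in> bforms d" and "u2 \<in> bforms d"
    and "p \<in> sos_forms d"
    and "grad_zero d ip p u1 u2"
    and "\<exists>v1\<in>bforms d. \<exists>v2\<in>bforms d. p = u1 * v1 + u2 * v2"
  shows "fp ip p u1 u2 = 0"
proof -
  note IP = assms(1)
  obtain w1 w2 where w: "w1 \<in> bforms d" "w2 \<in> bforms d" "p = u1 * w1 + u2 * w2"
    using assms(6) by blast
  define v1 where "v1 = u1 - w1"
  define v2 where "v2 = u2 - w2"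
  have v: "v1 \<in> bforms d" "v2 \<in> bforms d"
    unfolding v1_def v2_def using w assms(2,3) by (auto intro: bforms_diff)
  define r where "r = u1 ^ 2 + u2 ^ 2 - p"
  have rA: "r = u1 * v1 + u2 * v2"
    unfolding r_def v1_def v2_def w(3) by (simp add: algebra_simps power2_eq_square)
  have rB: "r \<in> bforms (2*d)" unfolding rA using assms(2,3) v
    by (auto intro: bforms_add bforms_mult)
  define a where "a = smult 2 r"
  define b where "b = v1 ^ 2 + v2 ^ 2"
  have aB: "a \<in> bforms (2*d)" unfolding a_def using rB by (rule bforms_smult)
  have bB: "b \<in> bforms (2*d)" unfolding b_def power2_eq_square using v
    by (auto intro: bforms_add bforms_mult)
  define R where "R t = r + smult t a + smult (t^2) b" for t
  have RB: "R t \<in> bforms (2*d)" for t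
    unfolding R_def using rB aB bB by (auto intro: bforms_add bforms_smult)
  have Req: "(u1 + smult t v1) ^ 2 + (u2 + smult t v2) ^ 2 - p = R t" for t
  proof -
    have "(u1 + smult t v1) ^ 2 + (u2 + smult t v2) ^ 2 - p
        = (u1^2+u2^2-p) + [:t:] * (2 * (u1 * v1 + u2 * v2)) + [:t:]^2 * (v1^2+v2^2)"
      unfolding sc by (rule ring_id)
    also have "\<dots> = r + [:t:] * (2 * r) + [:t:]^2 * b"
      unfolding b_def r_def[symmetric] rA[symmetric] by (rule refl)
    also have "\<dots> = R t"
      unfolding R_def a_def sc[of "t^2"] sc[of t] s2 sq by (rule refl)
    finally show ?thesis .
  qed
  have g: "fp ip p (u1 + smult t v1) (u2 + smult t v2)
      = ip r r + t * ip a r + t^2 * ip b r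
        + t * (ip r a + t * ip a a + t^2 * ip b a)
        + t^2 * (ip r b + t * ip a b + t^2 * ip b b)" for t
  proof -
    have "fp ip p (u1 + smult t v1) (u2 + smult t v2) = ip (R t) (R t)"
      unfolding fp_def ip_norm_def Req using ip_nonneg[OF IP RB] by simp
    also have "\<dots> = ip r (R t) + t * ip a (R t) + t^2 * ip b (R t)"
      unfolding R_def[of t] by (rule ip_lin3[OF IP rB aB bB RB[unfolded R_def]])
    also have "ip r (R t) = ip r r + t * ip a r + t^2 * ip b r"
      using ip_sym[OF IP rB RB] ip_lin3[OF IP rB aB bB rB] unfolding R_def by simp
    also have "ip a (R t) = ip r a + t * ip a a + t^2 * ip b a"
      using ip_sym[OF IP aB RB] ip_lin3[OF IP rB aB bB aB] unfolding R_def by simp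
    also have "ip b (R t) = ip r b + t * ip a b + t^2 * ip b b"
      using ip_sym[OF IP bB RB] ip_lin3[OF IP rB aB bB bB] unfolding R_def by simp
    finally show ?thesis .
  qed
  have D1: "((\<lambda>t. fp ip p (u1 + smult t v1) (u2 + smult t v2)) has_real_derivative 0) (at 0)"
    using assms(5) v unfolding grad_zero_def by blast
  have D2: "((\<lambda>t. fp ip p (u1 + smult t v1) (u2 + smult t v2)) has_real_derivative
      (ip a r + ip r a)) (at 0)"
    unfolding g by (auto intro!: derivative_eq_intros)
  have "ip a r + ip r a = 0" using DERIV_unique[OF D2 D1] .
  hence "ip a r = 0" using ip_sym[OF IP rB aB] by simp
  moreover have "ip a r = 2 * ip r r"
    using ip_lin[OF IP rB rB rB, of 2 0] unfolding a_def by simp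
  ultimately have "ip r r = 0" by simp
  hence "r = 0" using ip_pos[OF IP rB] by force
  thus ?thesis unfolding fp_def ip_norm_def r_def[symmetric] using ip_zero[OF IP] by simp
qed

end
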